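(* Let $T$ be a tree and $S\subseteq E(T)$. Then \[ d(T\setminus S,X)=\sum_{\mu\in\mathcal{V}_1(S)} d(T\setminus V(\mu),X), \] where $\mathcal{V}_1(S)$ is the set of matchings (including the empty matching) of the subgraph of $T$ formed by the edges in $S$.
   Context: For a graph $G$ with vertex set $V$, $L(G,X_G)$ is the matrix indexed by $V$ with diagonal entries $x_u$ and off-diagonal entries $-m_{uv}$ ($m_{uv}$ the number of edges between $u$ and $v$), and $d(G,X)=\det L(G,X_G)$ (equal to $1$ for the graph with no vertices). $T\setminus S$ denotes $T$ with the edges in $S$ deleted (all vertices kept); $T\setminus V(\mu)$ denotes $T$ with the vertices covered by $\mu$ (and their incident edges) deleted. A matching is a set of pairwise vertex-disjoint edges. *)

theory Defs
  imports "HOL-Combinatorics.Permutations"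
begin

text \<open>Simple graphs: finite vertex set V, edge set E of 2-element subsets of V.
  (A tree is a simple graph, so edge multiplicities are 0 or 1.)\<close>

definition simple_graph :: "'a set \<Rightarrow> 'a set set \<Rightarrow> bool" where
  "simple_graph V E \<longleftrightarrow> finite V \<and> (\<forall>e\<in>E. \<exists>u v. e = {u, v} \<and> u \<noteq> v \<and> u \<in> V \<and> v \<in> V)"

definition adj :: "'a set set \<Rightarrow> 'a \<Rightarrow> 'a \<Rightarrow> bool" where
  "adj E u v \<longleftrightarrow> {u, v} \<in> E \<and> u \<noteq> v"

definition connected_graph :: "'a set \<Rightarrow> 'a set set \<Rightarrow> bool" where
  "connected_graph V E \<longleftrightarrow> (\<forall>u\<in>V. \<forall>v\<in>V. (adj E)\<^sup>*\<^sup>* u v)"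

definition is_cycle :: "'a set set \<Rightarrow> 'a list \<Rightarrow> bool" where
  "is_cycle E cs \<longleftrightarrow> length cs \<ge> 3 \<and> distinct cs \<and>
     (\<forall>i. Suc i < length cs \<longrightarrow> adj E (cs ! i) (cs ! Suc i)) \<and> adj E (last cs) (hd cs)"

definition is_tree :: "'a set \<Rightarrow> 'a set set \<Rightarrow> bool" where
  "is_tree V E \<longleftrightarrow> simple_graph V E \<and> V \<noteq> {} \<and> connected_graph V E \<and> (\<nexists>cs. is_cycle E cs)"

definition det_on :: "'a set \<Rightarrow> ('a \<Rightarrow> 'a \<Rightarrow> 'r::comm_ring_1) \<Rightarrow> 'r" where
  "det_on I M = (\<Sum>p | p permutes I. of_int (sign p) * (\<Prod>u\<in>I. M u (p u)))"

text \<open>L(G,X_G): diagonal x_u, off-diagonal -m_uv (m_uv = number of edges between u and v).\<close>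
definition Lmat :: "'a set set \<Rightarrow> ('a \<Rightarrow> 'r::comm_ring_1) \<Rightarrow> 'a \<Rightarrow> 'a \<Rightarrow> 'r" where
  "Lmat E x u v = (if u = v then x u else - (if {u, v} \<in> E then 1 else 0))"

definition dpoly :: "'a set \<Rightarrow> 'a set set \<Rightarrow> ('a \<Rightarrow> 'r::comm_ring_1) \<Rightarrow> 'r" where
  "dpoly V E x = det_on V (Lmat E x)"

definition is_matching :: "'a set set \<Rightarrow> bool" where
  "is_matching M \<longleftrightarrow> (\<forall>e\<in>M. \<forall>f\<in>M. e \<noteq> f \<longrightarrow> e \<inter> f = {})"

definition del_vertices_V :: "'a set \<Rightarrow> 'a set set \<Rightarrow> 'a set" where
  "del_vertices_V V M = V - \<Union>M"

definition del_vertices_E :: "'a set set \<Rightarrow> 'a set set \<Rightarrow> 'a set set" where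
  "del_vertices_E E M = {e \<in> E. e \<inter> \<Union>M = {}}"

end

theory Submission imports Defs "HOL-Combinatorics.Orbits"
begin

lemma det_on_cong:
  assumes "\<And>u v. u \<in> I \<Longrightarrow> v \<in> I \<Longrightarrow> M u v = M' u v"
  shows "det_on I M = det_on I M'"
  unfolding det_on_def
proof (rule sum.cong[OF refl])
  fix p assume "p \<in> {p. p permutes I}"
  hence p: "p permutes I" by simp
  show "of_int (sign p) * (\<Prod>u\<in>I. M u (p u)) = of_int (sign p) * (\<Prod>u\<in>I. M' u (p u))"
    using assms permutes_in_image[OF p] by (intro arg_cong2[where f="(*)"] refl prod.cong) auto
qed

lemma prod_nonzero_good:
  fixes x :: "'a \<Rightarrow> 'r::comm_ring_1"
  assumes "finite V" "(\<Prod>w\<in>V. Lmat E x w (p w)) \<noteq> 0" "w \<in> V"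
  shows "p w = w \<or> {w, p w} \<in> E"
proof (rule ccontr)
  assume "\<not> ?thesis"
  hence "Lmat E x w (p w) = 0" by (auto simp: Lmat_def)
  hence "(\<Prod>w\<in>V. Lmat E x w (p w)) = 0" using assms by (intro prod_zero) auto
  with assms show False by simp
qed

lemma good_invol:
  assumes p: "p permutes V" and fin: "finite V"
    and good: "\<And>w. w \<in> V \<Longrightarrow> p w = w \<or> {w, p w} \<in> E"
    and acyc: "\<nexists>cs. is_cycle E cs"
  shows "p (p a) = a"
proof (rule ccontr)
  assume H: "p (p a) \<noteq> a"
  hence pa: "p a \<noteq> a" by auto
  hence aV: "a \<in> V" using permutes_not_in[OF p] by blast
  have perm: "permutation p" using p fin permutation_permutes by blast
  have orb: "a \<in> orbit p a" by (rule permutation_self_in_orbit[OF perm])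
  define k where "k = funpow_dist1 p a a"
  have pk: "(p ^^ k) a = a" unfolding k_def by (rule funpow_dist1_prop[OF orb])
  have neq: "\<And>m n. m < k \<Longrightarrow> n < k \<Longrightarrow> m \<noteq> n \<Longrightarrow> (p ^^ m) a \<noteq> (p ^^ n) a"
    unfolding k_def using funpow_neq_less_funpow_dist1[OF orb] by blast
  have k1: "k \<noteq> 1" using pk pa by auto
  have k2: "k \<noteq> 2" using pk H by (auto simp: numeral_2_eq_2)
  have k0: "k \<noteq> 0" unfolding k_def by simp
  have k3: "k \<ge> 3" using k0 k1 k2 by linarith
  have inV: "\<And>i. (p ^^ i) a \<in> V" using permutes_in_funpow_image[OF p aV] .
  have edge: "adj E ((p ^^ i) a) (p ((p ^^ i) a))" if "i < k" "Suc i < k \<or> Suc i = k" for i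
  proof -
    have ne: "(p ^^ i) a \<noteq> p ((p ^^ i) a)"
    proof (cases "Suc i < k")
      case True
      from neq[OF that(1) True] show ?thesis by simp
    next
      case False
      hence "Suc i = k" using that by simp
      hence "p ((p ^^ i) a) = a" using pk by (metis funpow.simps(2) o_apply)
      moreover have "(p ^^ i) a \<noteq> (p ^^ 0) a" using neq[OF that(1), of 0] \<open>Suc i = k\<close> k3 by auto
      ultimately show ?thesis by simp
    qed
    thus ?thesis using good[OF inV[of i]] by (auto simp: adj_def)
  qed
  define cs where "cs = map (\<lambda>i. (p ^^ i) a) [0..<k]"
  have "is_cycle E cs"
    unfolding is_cycle_def
  proof (intro conjI allI impI)
    show "3 \<le> length cs" using k3 by (simp add: cs_def)
    show "distinct cs" unfolding cs_def distinct_map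
      using neq by (auto intro!: inj_onI) (metis)
    fix i assume "Suc i < length cs"
    hence i: "Suc i < k" by (simp add: cs_def)
    show "adj E (cs ! i) (cs ! Suc i)" using edge[of i] i by (simp add: cs_def)
  next
    have l: "last cs = (p ^^ (k - 1)) a" using k3 by (simp add: cs_def last_map)
    have h: "hd cs = a" using k3 by (simp add: cs_def hd_map hd_upt)
    have "p ((p ^^ (k - 1)) a) = a" using pk k3
      by (metis Suc_diff_1 funpow.simps(2) k0 neq0_conv o_apply)
    thus "adj E (last cs) (hd cs)" unfolding l h using edge[of "k - 1"] k3 by simp
  qed
  with acyc show False by blast
qed


lemma deletion:
  fixes x :: "'a \<Rightarrow> 'r::comm_ring_1"
  assumes fin: "finite V" and acyc: "\<nexists>cs. is_cycle E cs"
    and e: "{u,v} \<in> E" "u \<noteq> v" "u \<in> V" "v \<in> V"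
  shows "det_on V (Lmat (E - {{u,v}}) x) = det_on V (Lmat E x) + det_on (V - {u,v}) (Lmat E x)"
proof -
  define P where "P = {p. p permutes V}"
  define A where "A = {p \<in> P. p u = v \<and> p v = u}"
  define B where "B = P - A"
  define t where "t F p = of_int (sign p) * (\<Prod>w\<in>V. Lmat F x w (p w))" for F p
  have fP: "finite P" unfolding P_def using finite_permutations[OF fin] .
  have AP: "A \<subseteq> P" unfolding A_def by auto
  have fA: "finite A" using fP AP finite_subset by blast
  have fB: "finite B" using fP B_def by auto
  have splitP: "P = A \<union> B" "A \<inter> B = {}" unfolding B_def using AP by auto
  have det: "det_on V (Lmat F x) = sum (t F) A + sum (t F) B" for F
    unfolding det_on_def t_def P_def[symmetric] splitP(1)
    using fA fB splitP(2) by (rule sum.union_disjoint)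
  have zero_u: "t (E - {{u,v}}) p = 0" if "p u = v" for p
  proof -
    have "Lmat (E - {{u,v}}) x u (p u) = 0" using that e by (simp add: Lmat_def)
    thus ?thesis unfolding t_def using fin e by (subst prod_zero) auto
  qed
  have zero_v: "t (E - {{u,v}}) p = 0" if "p v = u" for p
  proof -
    have "Lmat (E - {{u,v}}) x v (p v) = 0" using that e by (simp add: Lmat_def insert_commute)
    thus ?thesis unfolding t_def using fin e by (subst prod_zero) auto
  qed
  have A0: "sum (t (E - {{u,v}})) A = 0"
    using zero_u by (intro sum.neutral) (auto simp: A_def)
  have Beq: "sum (t (E - {{u,v}})) B = sum (t E) B"
  proof (rule sum.cong[OF refl])
    fix p assume pB: "p \<in> B"
    hence p: "p permutes V" and nA: "\<not> (p u = v \<and> p v = u)" by (auto simp: B_def A_def P_def)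
    show "t (E - {{u,v}}) p = t E p"
    proof (cases "p u = v \<or> p v = u")
      case True
      have "t E p = 0"
      proof (rule ccontr)
        assume "t E p \<noteq> 0"
        hence "(\<Prod>w\<in>V. Lmat E x w (p w)) \<noteq> 0" unfolding t_def by auto
        hence "\<And>w. w \<in> V \<Longrightarrow> p w = w \<or> {w, p w} \<in> E" using prod_nonzero_good[OF fin] by blast
        hence "\<And>a. p (p a) = a" using good_invol[OF p fin _ acyc] by blast
        thus False using True nA by metis
      qed
      thus ?thesis using True zero_u zero_v by auto
    next
      case False
      show ?thesis unfolding t_def
      proof (intro arg_cong2[where f="(*)"] refl prod.cong)
        fix w assume "w \<in> V"
        show "Lmat (E - {{u,v}}) x w (p w) = Lmat E x w (p w)"
          using False by (auto simp: Lmat_def doubleton_eq_iff)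
      qed
    qed
  qed
  define Q where "Q = {q. q permutes (V - {u,v})}"
  have Aimg: "A = (\<lambda>q. Transposition.transpose u v \<circ> q) ` Q"
  proof (intro set_eqI iffI)
    fix p assume "p \<in> A"
    hence p: "p permutes V" "p u = v" "p v = u" by (auto simp: A_def P_def)
    define q where "q = Transposition.transpose u v \<circ> p"
    have "q permutes V" unfolding q_def using p(1) permutes_swap_id[OF e(3,4)] by (rule permutes_compose)
    hence "q permutes (V - {u,v})"
      by (rule permutes_superset) (auto simp: q_def p)
    moreover have "p = Transposition.transpose u v \<circ> q" unfolding q_def
      by (simp add: comp_assoc[symmetric])
    ultimately show "p \<in> (\<lambda>q. Transposition.transpose u v \<circ> q) ` Q" unfolding Q_def by blast
  next
    fix p assume "p \<in> (\<lambda>q. Transposition.transpose u v \<circ> q) ` Q"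
    then obtain q where q: "q permutes (V - {u,v})" and pq: "p = Transposition.transpose u v \<circ> q"
      unfolding Q_def by blast
    have qV: "q permutes V" using q by (rule permutes_subset) auto
    have "q u = u" "q v = v" using permutes_not_in[OF q] by auto
    moreover have "p permutes V" unfolding pq using qV permutes_swap_id[OF e(3,4)] by (rule permutes_compose)
    ultimately show "p \<in> A" unfolding A_def P_def pq by auto
  qed
  have inj: "inj_on (\<lambda>q. Transposition.transpose u v \<circ> q) Q"
    by (rule inj_onI) (metis comp_assoc transpose_comp_involutory comp_id id_comp)
  have Aval: "sum (t E) A = - det_on (V - {u,v}) (Lmat E x)"
  proof -
    have "sum (t E) A = (\<Sum>q\<in>Q. t E (Transposition.transpose u v \<circ> q))"
      unfolding Aimg using inj by (simp add: sum.reindex)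
    also have "\<dots> = (\<Sum>q\<in>Q. - (of_int (sign q) * (\<Prod>w\<in>V - {u,v}. Lmat E x w (q w))))"
    proof (rule sum.cong[OF refl])
      fix q assume "q \<in> Q"
      hence q: "q permutes (V - {u,v})" by (simp add: Q_def)
      have qu: "q u = u" "q v = v" using permutes_not_in[OF q] by auto
      have permq: "permutation q" using q fin permutation_permutes by blast
      have sg: "sign (Transposition.transpose u v \<circ> q) = - sign q"
        using sign_compose[OF permutation_swap_id permq, of u v] sign_swap_id[of u v] e(2) by simp
      have "(\<Prod>w\<in>V. Lmat E x w ((Transposition.transpose u v \<circ> q) w))
          = Lmat E x u v * (Lmat E x v u * (\<Prod>w\<in>V - {u,v}. Lmat E x w ((Transposition.transpose u v \<circ> q) w)))"
        using fin e qu
        by (simp add: prod.remove[of V u] prod.remove[of "V - {u}" v] Diff_insert2[symmetric] insert_commute)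
      also have "\<dots> = (\<Prod>w\<in>V - {u,v}. Lmat E x w (q w))"
      proof -
        have "Lmat E x u v = -1" "Lmat E x v u = -1" using e by (auto simp: Lmat_def insert_commute)
        moreover have "(\<Prod>w\<in>V - {u,v}. Lmat E x w ((Transposition.transpose u v \<circ> q) w))
             = (\<Prod>w\<in>V - {u,v}. Lmat E x w (q w))"
        proof (rule prod.cong[OF refl])
          fix w assume "w \<in> V - {u,v}"
          hence "q w \<in> V - {u,v}" using permutes_in_image[OF q] by blast
          thus "Lmat E x w ((Transposition.transpose u v \<circ> q) w) = Lmat E x w (q w)" by auto
        qed
        ultimately show ?thesis by simp
      qed
      finally show "t E (Transposition.transpose u v \<circ> q) = - (of_int (sign q) * (\<Prod>w\<in>V - {u,v}. Lmat E x w (q w)))"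
        unfolding t_def sg by simp
    qed
    also have "\<dots> = - det_on (V - {u,v}) (Lmat E x)"
      unfolding det_on_def Q_def by (simp add: sum_negf)
    finally show ?thesis .
  qed
  show ?thesis using det[of "E - {{u,v}}"] det[of E] A0 Beq Aval by simp
qed


lemma is_cycle_mono: "is_cycle E' cs \<Longrightarrow> E' \<subseteq> E \<Longrightarrow> is_cycle E cs"
  unfolding is_cycle_def adj_def by blast

lemma general:
  fixes x :: "'a \<Rightarrow> 'r::comm_ring_1"
  assumes "finite V" "\<nexists>cs. is_cycle E cs" "S \<subseteq> E" "finite S"
    "\<forall>e\<in>S. \<exists>a b. e = {a,b} \<and> a \<noteq> b \<and> a \<in> V \<and> b \<in> V"
  shows "det_on V (Lmat (E - S) x) =
    (\<Sum>\<mu>\<in>{\<mu>. \<mu> \<subseteq> S \<and> is_matching \<mu>}. det_on (V - \<Union>\<mu>) (Lmat E x))"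
  using assms
proof (induction "card S" arbitrary: V S rule: less_induct)
  case less
  show ?case
  proof (cases "S = {}")
    case True
    have "{\<mu>. \<mu> \<subseteq> S \<and> is_matching \<mu>} = {{}}" using True by (auto simp: is_matching_def)
    thus ?thesis using True by simp
  next
    case False
    then obtain e where eS: "e \<in> S" by blast
    then obtain u v where e: "e = {u,v}" "u \<noteq> v" "u \<in> V" "v \<in> V" using less.prems(5) by blast
    define S' where "S' = S - {e}"
    define S'' where "S'' = {f \<in> S'. f \<inter> {u,v} = {}}"
    have cS': "card S' < card S" unfolding S'_def using eS less.prems(4) by (meson card_Diff1_less)
    have S''S': "S'' \<subseteq> S'" unfolding S''_def by auto
    have cS'': "card S'' < card S" using cS' card_mono[OF _ S''S'] less.prems(4) S'_def
      by (meson finite_Diff le_less_trans)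
    have fS': "finite S'" using less.prems(4) S'_def by simp
    have fS'': "finite S''" using fS' S''S' finite_subset by blast
    have acyc': "\<nexists>cs. is_cycle (E - S') cs" proof
      assume "\<exists>cs. is_cycle (E - S') cs"
      then obtain cs where "is_cycle (E - S') cs" by blast
      hence "is_cycle E cs" by (rule is_cycle_mono) auto
      with less.prems(2) show False by blast
    qed
    have eE: "{u,v} \<in> E - S'" using eS e less.prems(3) S'_def by auto
    have ES: "E - S = (E - S') - {{u,v}}" using eS e S'_def by auto
    have step: "det_on V (Lmat (E - S) x) = det_on V (Lmat (E - S') x) + det_on (V - {u,v}) (Lmat (E - S') x)"
      unfolding ES by (rule deletion[OF less.prems(1) acyc' eE e(2-4)])
    define M1 where "M1 = {\<mu>. \<mu> \<subseteq> S' \<and> is_matching \<mu>}"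
    define M2 where "M2 = {\<mu>. \<mu> \<subseteq> S'' \<and> is_matching \<mu>}"
    have IH1: "det_on V (Lmat (E - S') x) = (\<Sum>\<mu>\<in>M1. det_on (V - \<Union>\<mu>) (Lmat E x))"
      unfolding M1_def
      using less.hyps[OF cS' less.prems(1,2)] less.prems(3-5) fS' S'_def by auto
    have cong: "det_on (V - {u,v}) (Lmat (E - S') x) = det_on (V - {u,v}) (Lmat (E - S'') x)"
      by (rule det_on_cong) (auto simp: Lmat_def S''_def)
    have IH2: "det_on (V - {u,v}) (Lmat (E - S'') x) = (\<Sum>\<mu>\<in>M2. det_on ((V - {u,v}) - \<Union>\<mu>) (Lmat E x))"
      unfolding M2_def
    proof (rule less.hyps[OF cS''])
      show "finite (V - {u, v})" using less.prems(1) by simp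
      show "\<nexists>cs. is_cycle E cs" by fact
      show "S'' \<subseteq> E" using S''S' S'_def less.prems(3) by auto
      show "finite S''" by fact
      show "\<forall>f\<in>S''. \<exists>a b. f = {a, b} \<and> a \<noteq> b \<and> a \<in> V - {u, v} \<and> b \<in> V - {u, v}"
      proof
        fix f assume f: "f \<in> S''"
        have "f \<in> S" using f S''S' S'_def by auto
        then obtain a b where "f = {a,b}" "a \<noteq> b" "a \<in> V" "b \<in> V"
          using less.prems(5) by blast
        thus "\<exists>a b. f = {a, b} \<and> a \<noteq> b \<and> a \<in> V - {u, v} \<and> b \<in> V - {u, v}"
          using f S''_def by auto
      qed
    qed
    have eS'': "e \<notin> S''" unfolding S''_def e by auto
    have inj: "inj_on (insert e) M2"
    proof (rule inj_onI)
      fix A B assume "A \<in> M2" "B \<in> M2" "insert e A = insert e B"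
      moreover have "e \<notin> A" "e \<notin> B" using \<open>A \<in> M2\<close> \<open>B \<in> M2\<close> eS'' M2_def by auto
      ultimately show "A = B" by (metis insert_ident)
    qed
    have sum2: "(\<Sum>\<mu>\<in>M2. det_on ((V - {u,v}) - \<Union>\<mu>) (Lmat E x)) = (\<Sum>\<mu>\<in>insert e ` M2. det_on (V - \<Union>\<mu>) (Lmat E x))"
    proof -
      have "(\<Sum>\<mu>\<in>insert e ` M2. det_on (V - \<Union>\<mu>) (Lmat E x)) = (\<Sum>\<mu>\<in>M2. det_on (V - \<Union>(insert e \<mu>)) (Lmat E x))"
        by (subst sum.reindex[OF inj]) (simp add: o_def)
      moreover have "\<And>\<mu>. V - \<Union>(insert e \<mu>) = (V - {u,v}) - \<Union>\<mu>" unfolding e by auto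
      ultimately show ?thesis by simp
    qed
    have Msplit: "{\<mu>. \<mu> \<subseteq> S \<and> is_matching \<mu>} = M1 \<union> insert e ` M2"
    proof (intro set_eqI iffI)
      fix \<mu> assume "\<mu> \<in> {\<mu>. \<mu> \<subseteq> S \<and> is_matching \<mu>}"
      hence mu: "\<mu> \<subseteq> S" "is_matching \<mu>" by auto
      show "\<mu> \<in> M1 \<union> insert e ` M2"
      proof (cases "e \<in> \<mu>")
        case False
        thus ?thesis using mu by (auto simp: M1_def S'_def)
      next
        case True
        have "\<mu> - {e} \<subseteq> S''"
        proof
          fix f assume f: "f \<in> \<mu> - {e}"
          hence "f \<in> S'" using mu(1) S'_def by auto
          moreover have "f \<inter> e = {}" using mu(2) f True unfolding is_matching_def by blast
          ultimately show "f \<in> S''" unfolding S''_def e by simp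
        qed
        moreover have "is_matching (\<mu> - {e})" using mu(2) unfolding is_matching_def by blast
        ultimately have "\<mu> - {e} \<in> M2" unfolding M2_def by simp
        moreover have "\<mu> = insert e (\<mu> - {e})" using True by auto
        ultimately show ?thesis by blast
      qed
    next
      fix \<mu> assume "\<mu> \<in> M1 \<union> insert e ` M2"
      thus "\<mu> \<in> {\<mu>. \<mu> \<subseteq> S \<and> is_matching \<mu>}"
        using eS unfolding M1_def M2_def S''_def S'_def is_matching_def e by blast
    qed
    have fM: "finite M1" "finite M2"
      proof -
      have "M1 \<subseteq> Pow S'" "M2 \<subseteq> Pow S''" unfolding M1_def M2_def by auto
      thus "finite M1" "finite M2" using fS' fS'' finite_subset by (metis finite_Pow_iff)+
    qed
    have disj: "M1 \<inter> insert e ` M2 = {}" unfolding M1_def S'_def by auto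
    show ?thesis
      unfolding step IH1 cong IH2 sum2 Msplit using fM disj by (simp add: sum.union_disjoint)
  qed
qed


lemma del_cong:
  assumes "u \<in> V - \<Union>\<mu>" "v \<in> V - \<Union>\<mu>"
  shows "Lmat (del_vertices_E E \<mu>) x u v = Lmat E x u v"
proof -
  have "({u, v} \<in> del_vertices_E E \<mu>) = ({u, v} \<in> E)"
    using assms unfolding del_vertices_E_def by blast
  thus ?thesis unfolding Lmat_def by simp
qed

theorem lemma3p4:
  fixes V :: "'a set" and E S :: "'a set set" and x :: "'a \<Rightarrow> 'r::comm_ring_1"
  assumes "is_tree V E" and "S \<subseteq> E"
  shows "dpoly V (E - S) x =
    (\<Sum>\<mu> \<in> {\<mu>. \<mu> \<subseteq> S \<and> is_matching \<mu>}.
        dpoly (del_vertices_V V \<mu>) (del_vertices_E E \<mu>) x)"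
proof -
  have sg: "simple_graph V E" using assms(1) unfolding is_tree_def by simp
  have acyc: "\<nexists>cs. is_cycle E cs" using assms(1) unfolding is_tree_def by simp
  have fV: "finite V" using sg unfolding simple_graph_def by simp
  have edges: "\<forall>e\<in>E. \<exists>a b. e = {a,b} \<and> a \<noteq> b \<and> a \<in> V \<and> b \<in> V"
    using sg unfolding simple_graph_def by simp
  have "E \<subseteq> Pow V"
  proof
    fix e assume "e \<in> E"
    then obtain a b where "e = {a,b}" "a \<in> V" "b \<in> V" using edges by blast
    thus "e \<in> Pow V" by simp
  qed
  hence fE: "finite E" using fV by (rule finite_subset[OF _ finite_Pow_iff[THEN iffD2]])
  have fS: "finite S" using fE assms(2) by (rule finite_subset[rotated])
  have edgesS: "\<forall>e\<in>S. \<exists>a b. e = {a,b} \<and> a \<noteq> b \<and> a \<in> V \<and> b \<in> V"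
    using edges assms(2) by (meson subsetD)
  have G: "det_on V (Lmat (E - S) x) =
    (\<Sum>\<mu>\<in>{\<mu>. \<mu> \<subseteq> S \<and> is_matching \<mu>}. det_on (V - \<Union>\<mu>) (Lmat E x))"
    by (rule general[OF fV acyc assms(2) fS edgesS])
  have D: "dpoly (del_vertices_V V \<mu>) (del_vertices_E E \<mu>) x = det_on (V - \<Union>\<mu>) (Lmat E x)" for \<mu>
    unfolding dpoly_def del_vertices_V_def
    by (rule det_on_cong) (rule del_cong)
  show ?thesis unfolding dpoly_def[of V] G D ..
qed

end
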